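(* Consider the weighted median search process described in the context, with initial weights satisfying $\omega_0(V)=1$. For every $\tau\ge 0$ and any sequence of answers, $$\omega_\tau(V\setminus\{x_\tau\})\le\frac{1}{2^\tau},$$ where $x_\tau$ is a heaviest vertex with respect to $\omega_\tau$ (i.e., $\omega_\tau(x_\tau)\ge\omega_\tau(u)$ for all $u\in V$, ties broken arbitrarily).
   Context: $G=(V,E)$ is a connected undirected unweighted graph, $0<p<\frac12$, $d(u,v)$ is the graph distance. Positive weights $\omega_t(v)$ are maintained, with $\omega(U)=\sum_{u\in U}\omega(u)$; a vertex $v$ is heavy (w.r.t. $\omega$) if $\omega(v)/\omega(V)\ge\frac12$. A median w.r.t. $\omega$ is a vertex $q$ minimizing $\sum_{u\in V}d(u,q)\omega(u)$. In step $t$ the process queries a median $q$ w.r.t. $\omega_{t-1}$, where a heavy vertex is chosen whenever one exists (a heavy vertex is always a median). The answer is either "yes" or a neighbor $u$ of $q$ (a "no-answer"). A vertex $v$ is compatible with the answer if: for a yes-answer, $v=q$; for a no-answer $u$ with $q$ not heavy, $u$ lies on a shortest $q$–$v$ path; for a no-answer with $q$ heavy, $v\neq q$. Bayesian update: $\omega_t(v)=(1-p)\omega_{t-1}(v)$ if $v$ is compatible and $\omega_t(v)=p\,\omega_{t-1}(v)$ otherwise. *)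

theory Defs
  imports Main Complex_Main
begin

definition is_walk :: "('a \<Rightarrow> 'a \<Rightarrow> bool) \<Rightarrow> 'a list \<Rightarrow> bool" where
  "is_walk E xs \<longleftrightarrow> xs \<noteq> [] \<and> (\<forall>i. Suc i < length xs \<longrightarrow> E (xs ! i) (xs ! Suc i))"

definition walk_between :: "('a \<Rightarrow> 'a \<Rightarrow> bool) \<Rightarrow> 'a \<Rightarrow> 'a \<Rightarrow> 'a list \<Rightarrow> bool" where
  "walk_between E u v xs \<longleftrightarrow> is_walk E xs \<and> hd xs = u \<and> last xs = v"

definition graph_connected :: "'a set \<Rightarrow> ('a \<Rightarrow> 'a \<Rightarrow> bool) \<Rightarrow> bool" where
  "graph_connected V E \<longleftrightarrow> (\<forall>u\<in>V. \<forall>v\<in>V. \<exists>xs. walk_between E u v xs)"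

definition simple_graph :: "'a set \<Rightarrow> ('a \<Rightarrow> 'a \<Rightarrow> bool) \<Rightarrow> bool" where
  "simple_graph V E \<longleftrightarrow> finite V \<and> V \<noteq> {} \<and>
     (\<forall>u v. E u v \<longrightarrow> u \<in> V \<and> v \<in> V) \<and>
     (\<forall>u v. E u v \<longrightarrow> E v u) \<and> (\<forall>u. \<not> E u u)"

definition gdist :: "('a \<Rightarrow> 'a \<Rightarrow> bool) \<Rightarrow> 'a \<Rightarrow> 'a \<Rightarrow> nat" where
  "gdist E u v = (LEAST n. \<exists>xs. walk_between E u v xs \<and> length xs = Suc n)"

definition on_shortest_path :: "('a \<Rightarrow> 'a \<Rightarrow> bool) \<Rightarrow> 'a \<Rightarrow> 'a \<Rightarrow> 'a \<Rightarrow> bool" where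
  "on_shortest_path E q v u \<longleftrightarrow>
     (\<exists>xs. walk_between E q v xs \<and> length xs = Suc (gdist E q v) \<and> u \<in> set xs)"

definition heavy :: "'a set \<Rightarrow> ('a \<Rightarrow> real) \<Rightarrow> 'a \<Rightarrow> bool" where
  "heavy V w v \<longleftrightarrow> v \<in> V \<and> w v / (\<Sum>u\<in>V. w u) \<ge> 1/2"

definition median_cost :: "'a set \<Rightarrow> ('a \<Rightarrow> 'a \<Rightarrow> bool) \<Rightarrow> ('a \<Rightarrow> real) \<Rightarrow> 'a \<Rightarrow> real" where
  "median_cost V E w q = (\<Sum>u\<in>V. real (gdist E u q) * w u)"

definition is_median :: "'a set \<Rightarrow> ('a \<Rightarrow> 'a \<Rightarrow> bool) \<Rightarrow> ('a \<Rightarrow> real) \<Rightarrow> 'a \<Rightarrow> bool" where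
  "is_median V E w q \<longleftrightarrow> q \<in> V \<and> (\<forall>y\<in>V. median_cost V E w q \<le> median_cost V E w y)"

text \<open>Answers: None = "yes", Some u = no-answer pointing to neighbour u.
  Compatibility of vertex v with answer a to query q, given current weights w.\<close>
definition compatible ::
  "'a set \<Rightarrow> ('a \<Rightarrow> 'a \<Rightarrow> bool) \<Rightarrow> ('a \<Rightarrow> real) \<Rightarrow> 'a \<Rightarrow> 'a option \<Rightarrow> 'a \<Rightarrow> bool" where
  "compatible V E w q a v =
     (case a of
        None \<Rightarrow> v = q
      | Some u \<Rightarrow> (if heavy V w q then v \<noteq> q else on_shortest_path E q v u))"

definition heaviest :: "'a set \<Rightarrow> ('a \<Rightarrow> real) \<Rightarrow> 'a \<Rightarrow> bool" where
  "heaviest V w x \<longleftrightarrow> x \<in> V \<and> (\<forall>u\<in>V. w u \<le> w x)"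

definition median_process ::
  "'a set \<Rightarrow> ('a \<Rightarrow> 'a \<Rightarrow> bool) \<Rightarrow> real \<Rightarrow> (nat \<Rightarrow> 'a \<Rightarrow> real) \<Rightarrow> (nat \<Rightarrow> 'a)
     \<Rightarrow> (nat \<Rightarrow> 'a option) \<Rightarrow> bool" where
  "median_process V E p w q a \<longleftrightarrow>
     (\<forall>v\<in>V. w 0 v > 0) \<and>
     (\<forall>t. is_median V E (w t) (q t) \<and>
          ((\<exists>v\<in>V. heavy V (w t) v) \<longrightarrow> heavy V (w t) (q t)) \<and>
          (\<forall>u. a t = Some u \<longrightarrow> E (q t) u) \<and>
          (\<forall>v\<in>V. w (Suc t) v =
              (if compatible V E (w t) (q t) (a t) v then (1 - p) else p) * w t v))"

end

theory Submission
  imports Defs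
begin

lemma walk_snoc:
  assumes "is_walk E xs" "E (last xs) u"
  shows "is_walk E (xs @ [u])"
  unfolding is_walk_def
proof (intro conjI allI impI)
  show "xs @ [u] \<noteq> []" by simp
  fix i assume i: "Suc i < length (xs @ [u])"
  have ne: "xs \<noteq> []" using assms(1) by (simp add: is_walk_def)
  show "E ((xs @ [u]) ! i) ((xs @ [u]) ! Suc i)"
  proof (cases "Suc i < length xs")
    case True
    then show ?thesis using assms(1) by (simp add: is_walk_def nth_append)
  next
    case False
    then have "Suc i = length xs" using i by simp
    then have "i = length xs - 1" by simp
    then show ?thesis using assms(2) ne \<open>Suc i = length xs\<close> by (simp add: nth_append last_conv_nth)
  qed
qed

lemma walk_rev:
  assumes "is_walk E xs" "\<And>a b. E a b \<Longrightarrow> E b a"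
  shows "is_walk E (rev xs)"
  unfolding is_walk_def
proof (intro conjI allI impI)
  show "rev xs \<noteq> []" using assms(1) by (simp add: is_walk_def)
  fix i assume i: "Suc i < length (rev xs)"
  define n where "n = length xs"
  have "E (xs ! (n - Suc (Suc i))) (xs ! Suc (n - Suc (Suc i)))"
    using assms(1) i unfolding is_walk_def n_def by simp
  moreover have "Suc (n - Suc (Suc i)) = n - Suc i" using i n_def by simp
  ultimately have "E (xs ! (n - Suc i)) (xs ! (n - Suc (Suc i)))" using assms(2) by metis
  then show "E (rev xs ! i) (rev xs ! Suc i)" using i by (simp add: rev_nth n_def)
qed

lemma walk_take:
  assumes "is_walk E xs" "0 < k"
  shows "is_walk E (take k xs)"
  using assms unfolding is_walk_def by auto

lemma gdist_sym:
  assumes "\<And>a b. E a b \<Longrightarrow> E b a"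
  shows "gdist E u v = gdist E v u"
proof -
  have r: "walk_between E b a (rev xs)" if "walk_between E a b xs" for a b xs
  proof -
    have "is_walk E (rev xs)" using walk_rev[of E xs] assms that unfolding walk_between_def by blast
    moreover have "xs \<noteq> []" using that unfolding walk_between_def is_walk_def by blast
    ultimately show ?thesis using that unfolding walk_between_def by (simp add: hd_rev last_rev)
  qed
  have "(\<lambda>n. \<exists>xs. walk_between E u v xs \<and> length xs = Suc n) =
             (\<lambda>n. \<exists>xs. walk_between E v u xs \<and> length xs = Suc n)"
  proof (intro ext iffI)
    fix n
    assume "\<exists>xs. walk_between E u v xs \<and> length xs = Suc n"
    then obtain xs where "walk_between E u v xs" "length xs = Suc n" by blast
    then show "\<exists>xs. walk_between E v u xs \<and> length xs = Suc n" using r[of u v xs] by (intro exI[of _ "rev xs"]) simp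
  next
    fix n
    assume "\<exists>xs. walk_between E v u xs \<and> length xs = Suc n"
    then obtain xs where "walk_between E v u xs" "length xs = Suc n" by blast
    then show "\<exists>xs. walk_between E u v xs \<and> length xs = Suc n" using r[of v u xs] by (intro exI[of _ "rev xs"]) simp
  qed
  then show ?thesis unfolding gdist_def by simp
qed

lemma gdist_le:
  assumes "walk_between E u v xs"
  shows "gdist E u v \<le> length xs - 1"
proof -
  have "length xs = Suc (length xs - 1)" using assms by (cases xs) (auto simp: walk_between_def is_walk_def)
  then have "\<exists>ys. walk_between E u v ys \<and> length ys = Suc (length xs - 1)" using assms by blast
  then show ?thesis unfolding gdist_def by (rule Least_le)
qed

lemma gdist_walk:
  assumes "walk_between E u v xs"
  shows "\<exists>ys. walk_between E u v ys \<and> length ys = Suc (gdist E u v)"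
proof -
  have "length xs = Suc (length xs - 1)" using assms by (cases xs) (auto simp: walk_between_def is_walk_def)
  then have "\<exists>n ys. walk_between E u v ys \<and> length ys = Suc n" using assms by blast
  then show ?thesis unfolding gdist_def by (rule LeastI_ex)
qed

lemma gdist_step:
  assumes "walk_between E v q xs" "E q u"
  shows "gdist E v u \<le> gdist E v q + 1"
proof -
  obtain ys where ys: "walk_between E v q ys" "length ys = Suc (gdist E v q)"
    using gdist_walk[OF assms(1)] by blast
  have "walk_between E v u (ys @ [u])"
    using ys(1) assms(2) walk_snoc unfolding walk_between_def
    by (metis append_is_Nil_conv hd_append2 is_walk_def last_snoc)
  from gdist_le[OF this] ys(2) show ?thesis by simp
qed

lemma gdist_short:
  assumes "on_shortest_path E q v u" "E q u" "\<And>a. \<not> E a a" "\<And>a b. E a b \<Longrightarrow> E b a"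
  shows "gdist E v u + 1 \<le> gdist E v q"
proof -
  obtain xs where xs: "walk_between E q v xs" "length xs = Suc (gdist E q v)" "u \<in> set xs"
    using assms(1) unfolding on_shortest_path_def by blast
  define ys where "ys = rev xs"
  have w: "is_walk E ys" using xs(1) walk_rev[of E xs] assms(4) unfolding walk_between_def ys_def by blast
  have ne: "ys \<noteq> []" using w by (simp add: is_walk_def)
  have hd: "hd ys = v" and la: "last ys = q" using xs(1) unfolding ys_def walk_between_def
    by (auto simp: hd_rev last_rev)
  have len: "length ys = Suc (gdist E v q)" using xs(2) gdist_sym[OF assms(4)] ys_def by simp
  obtain j where j: "j < length ys" "ys ! j = u" using xs(3) unfolding ys_def
    by (metis in_set_conv_nth set_rev)
  have uq: "u \<noteq> q" using assms(2,3) by blast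
  have "j \<noteq> length ys - 1" using j la ne uq by (metis last_conv_nth)
  then have jl: "Suc j < length ys" using j by simp
  have "walk_between E v u (take (Suc j) ys)"
    unfolding walk_between_def
  proof (intro conjI)
    show "is_walk E (take (Suc j) ys)" using walk_take[OF w] by simp
    show "hd (take (Suc j) ys) = v" using hd ne by (simp add: hd_take)
    show "last (take (Suc j) ys) = u" using j by (simp add: take_Suc_conv_app_nth)
  qed
  from gdist_le[OF this] have "gdist E v u \<le> j" using jl by simp
  then show ?thesis using jl len by simp
qed


lemma median_half:
  assumes sg: "simple_graph V E" and gc: "graph_connected V E"
    and med: "is_median V E w q" and equ: "E q u" and pos: "\<forall>v\<in>V. w v > 0"
  shows "2 * (\<Sum>v\<in>V. if on_shortest_path E q v u then w v else 0) \<le> (\<Sum>v\<in>V. w v)"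
proof -
  have EV: "\<And>a b. E a b \<Longrightarrow> a \<in> V \<and> b \<in> V" using sg unfolding simple_graph_def by meson
  have sym: "\<And>a b. E a b \<Longrightarrow> E b a" using sg unfolding simple_graph_def by meson
  have irr: "\<And>a. \<not> E a a" using sg unfolding simple_graph_def by meson
  have qV: "q \<in> V" and uV: "u \<in> V" using EV[OF equ] by auto
  define C where "C v = on_shortest_path E q v u" for v
  have pt: "real (gdist E v u) * w v \<le> real (gdist E v q) * w v + (if C v then - w v else w v)"
    if v: "v \<in> V" for v
  proof (cases "C v")
    case True
    have "gdist E v u + 1 \<le> gdist E v q" by (rule gdist_short[OF True[unfolded C_def] equ irr sym])
    then have "real (gdist E v u) \<le> real (gdist E v q) - 1" by linarith
    then have "real (gdist E v u) * w v \<le> (real (gdist E v q) - 1) * w v"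
      using pos v by (intro mult_right_mono) auto
    then show ?thesis using True by (simp add: algebra_simps)
  next
    case False
    obtain xs where "walk_between E v q xs" using gc v qV unfolding graph_connected_def by blast
    then have "gdist E v u \<le> gdist E v q + 1" using equ by (rule gdist_step)
    then have "real (gdist E v u) \<le> real (gdist E v q) + 1" by linarith
    then have "real (gdist E v u) * w v \<le> (real (gdist E v q) + 1) * w v"
      using pos v by (intro mult_right_mono) auto
    then show ?thesis using False by (simp add: algebra_simps)
  qed
  have "median_cost V E w u \<le> (\<Sum>v\<in>V. real (gdist E v q) * w v + (if C v then - w v else w v))"
    unfolding median_cost_def by (rule sum_mono) (rule pt)
  also have "\<dots> = median_cost V E w q + (\<Sum>v\<in>V. w v) - 2 * (\<Sum>v\<in>V. if C v then w v else 0)"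
  proof -
    have "(\<Sum>v\<in>V. (if C v then - w v else w v)) = (\<Sum>v\<in>V. w v - 2 * (if C v then w v else 0))"
      by (rule sum.cong) auto
    also have "\<dots> = (\<Sum>v\<in>V. w v) - 2 * (\<Sum>v\<in>V. if C v then w v else 0)"
      by (simp only: sum_subtractf sum_distrib_left)
    finally have e: "(\<Sum>v\<in>V. (if C v then - w v else w v)) = (\<Sum>v\<in>V. w v) - 2 * (\<Sum>v\<in>V. if C v then w v else 0)" .
    have "(\<Sum>v\<in>V. real (gdist E v q) * w v + (if C v then - w v else w v)) =
       (\<Sum>v\<in>V. real (gdist E v q) * w v) + (\<Sum>v\<in>V. (if C v then - w v else w v))"
      by (rule sum.distrib)
    then show ?thesis unfolding median_cost_def e by linarith
  qed
  finally have "median_cost V E w u \<le> median_cost V E w q + (\<Sum>v\<in>V. w v) - 2 * (\<Sum>v\<in>V. if C v then w v else 0)" .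
  moreover have "median_cost V E w q \<le> median_cost V E w u" using med uV unfolding is_median_def by blast
  ultimately show ?thesis unfolding C_def by linarith
qed

lemma heavy_step:
  fixes w0 w1 :: "'a \<Rightarrow> real"
  assumes fin: "finite V" and zV: "z \<in> V" and pos: "\<forall>v\<in>V. w0 v > 0"
    and hv: "(\<Sum>v\<in>V-{z}. w0 v) \<le> w0 z"
    and pr: "w0 z * (\<Sum>v\<in>V-{z}. w0 v) \<le> m^2" and m: "m > 0"
    and p: "0 < p" "p < 1/2"
    and wz: "w1 z = cz * w0 z" and wo: "\<forall>v\<in>V-{z}. w1 v = c * w0 v"
    and cc: "(cz = 1-p \<and> c = p) \<or> (cz = p \<and> c = 1-p)"
  shows "(\<Sum>v\<in>V. w1 v) \<le> m \<or> (heavy V w1 z \<and> w1 z * (\<Sum>v\<in>V-{z}. w1 v) \<le> (m/2)^2)"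
proof -
  define h where "h = w0 z"
  define s where "s = (\<Sum>v\<in>V-{z}. w0 v)"
  have h0: "h > 0" using pos zV h_def by auto
  have s0: "s \<ge> 0" unfolding s_def using pos by (intro sum_nonneg) auto
  have s1: "(\<Sum>v\<in>V-{z}. w1 v) = c * s" unfolding s_def sum_distrib_left
    using wo by (intro sum.cong) auto
  have W1: "(\<Sum>v\<in>V. w1 v) = w1 z + (\<Sum>v\<in>V-{z}. w1 v)"
    using fin zV by (simp add: sum.remove)
  have pq: "p * (1-p) \<le> 1/4"
  proof -
    have "0 \<le> (1 - 2*p)^2" by simp
    then show ?thesis by (simp add: power2_eq_square algebra_simps)
  qed
  have hs: "s \<le> h" "h * s \<le> m^2" using hv pr h_def s_def by auto
  have hvy: "heavy V w1 z" if "c * s \<le> cz * h"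
  proof -
    have c0: "c > 0" "cz > 0" using cc p by auto
    have "cz * h > 0" using c0 h0 by simp
    moreover have "c * s \<ge> 0" using c0 s0 by simp
    ultimately have "(\<Sum>v\<in>V. w1 v) > 0" "2 * w1 z \<ge> (\<Sum>v\<in>V. w1 v)" using W1 s1 wz that h_def
      by auto
    then show ?thesis unfolding heavy_def using zV by (simp add: field_simps)
  qed
  have prod: "w1 z * (\<Sum>v\<in>V-{z}. w1 v) \<le> (m/2)^2"
  proof -
    have "w1 z * (\<Sum>v\<in>V-{z}. w1 v) = (p * (1-p)) * (h * s)" using wz s1 h_def cc by auto
    also have "\<dots> \<le> (1/4) * (h*s)" using pq h0 s0 by (intro mult_right_mono) auto
    also have "\<dots> \<le> (1/4) * m^2" using hs by simp
    finally show ?thesis by (simp add: power_divide)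
  qed
  show ?thesis
  proof (cases "c * s \<le> cz * h")
    case True then show ?thesis using hvy prod by blast
  next
    case False
    have "\<not> (cz = 1-p \<and> c = p)"
    proof
      assume a: "cz = 1-p \<and> c = p"
      have "p * s \<le> p * h" using hs p by (simp add: mult_left_mono)
      also have "\<dots> \<le> (1-p) * h" using p h0 by (simp add: mult_right_mono)
      finally show False using False a by simp
    qed
    then have noyes: "cz = p" "c = 1 - p" using cc by auto
    have lt: "p * h < (1-p) * s" using False noyes by simp
    have "p * h > 0" using p h0 by simp
    then have "s \<noteq> 0" using lt by auto
    then have sp: "s > 0" using s0 by simp
    have sm: "s \<le> m"
    proof -
      have "s * s \<le> h * s" using hs s0 by (simp add: mult_right_mono)
      then have s2: "s^2 \<le> m^2" using hs by (simp add: power2_eq_square)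
      have "0 \<le> m" using m by simp
      from power2_le_imp_le[OF s2 this] show ?thesis .
    qed
    have "p * h + (1-p) * s \<le> m"
    proof (cases "p * m \<le> (1-p) * s")
      case True
      have "s * (p * h + (1-p) * s) = p * (h*s) + (1-p) * s * s" by (simp add: algebra_simps)
      also have "\<dots> \<le> p * m^2 + (1-p) * s * s" using hs p by simp
      also have "\<dots> \<le> m * s"
      proof -
        have "(m - s) * (p*m - (1-p)*s) \<le> 0" using sm True by (simp add: mult_nonneg_nonpos)
        then show ?thesis by (simp add: algebra_simps power2_eq_square)
      qed
      finally have "s * (p * h + (1-p) * s) \<le> s * m" by (simp add: mult.commute)
      then show ?thesis using sp by simp
    next
      case False
      have "p * m < m / 2" using p m by simp
      then show ?thesis using lt False by linarith
    qed
    moreover have "(\<Sum>v\<in>V. w1 v) = p * h + (1-p) * s"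
      unfolding W1 s1 wz noyes h_def by (rule refl)
    ultimately show ?thesis by (intro disjI1) simp
  qed
qed


lemma heavy_le:
  assumes fin: "finite V" and pos: "\<forall>v\<in>V. w v > 0" and hz: "heavy V w z"
  shows "(\<Sum>v\<in>V-{z}. w v) \<le> w z"
proof -
  have zV: "z \<in> V" using hz by (simp add: heavy_def)
  have W: "(\<Sum>v\<in>V. w v) = w z + (\<Sum>v\<in>V-{z}. w v)" using fin zV by (simp add: sum.remove)
  have "w z > 0" using pos zV by simp
  moreover have "(\<Sum>v\<in>V-{z}. w v) \<ge> 0" using pos by (intro sum_nonneg) auto
  ultimately have Wp: "(\<Sum>v\<in>V. w v) > 0" using W by simp
  have "w z / (\<Sum>v\<in>V. w v) \<ge> 1/2" using hz by (simp add: heavy_def)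
  then have "(\<Sum>v\<in>V. w v) \<le> 2 * w z" using Wp by (simp add: field_simps)
  then show ?thesis using W by simp
qed

lemma not_heavy_lt:
  assumes fin: "finite V" and pos: "\<forall>v\<in>V. w v > 0" and zV: "z \<in> V" and hz: "\<not> heavy V w z"
  shows "2 * w z \<le> (\<Sum>v\<in>V. w v)"
proof -
  have W: "(\<Sum>v\<in>V. w v) = w z + (\<Sum>v\<in>V-{z}. w v)" using fin zV by (simp add: sum.remove)
  have "w z > 0" using pos zV by simp
  moreover have "(\<Sum>v\<in>V-{z}. w v) \<ge> 0" using pos by (intro sum_nonneg) auto
  ultimately have Wp: "(\<Sum>v\<in>V. w v) > 0" using W by simp
  have "w z / (\<Sum>v\<in>V. w v) < 1/2" using hz zV by (simp add: heavy_def)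
  then show ?thesis using Wp by (simp add: field_simps)
qed

lemma two_heavy:
  assumes fin: "finite V" and pos: "\<forall>v\<in>V. w v > 0" and hz: "heavy V w z" and hy: "heavy V w y"
  shows "w z * (\<Sum>v\<in>V-{z}. w v) = w y * (\<Sum>v\<in>V-{y}. w v)"
proof (cases "y = z")
  case True then show ?thesis by simp
next
  case False
  have zV: "z \<in> V" and yV: "y \<in> V" using hz hy by (auto simp: heavy_def)
  have Wz: "(\<Sum>v\<in>V. w v) = w z + (\<Sum>v\<in>V-{z}. w v)" using fin zV by (simp add: sum.remove)
  have Wy: "(\<Sum>v\<in>V. w v) = w y + (\<Sum>v\<in>V-{y}. w v)" using fin yV by (simp add: sum.remove)
  have "w y \<le> (\<Sum>v\<in>V-{z}. w v)"
  proof -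
    have "(\<Sum>v\<in>{y}. w v) \<le> (\<Sum>v\<in>V-{z}. w v)"
      using fin yV False pos by (intro sum_mono2) auto
    then show ?thesis by simp
  qed
  moreover have "w z \<le> (\<Sum>v\<in>V-{y}. w v)"
  proof -
    have "(\<Sum>v\<in>{z}. w v) \<le> (\<Sum>v\<in>V-{y}. w v)"
      using fin zV False pos by (intro sum_mono2) auto
    then show ?thesis by simp
  qed
  moreover have "(\<Sum>v\<in>V-{z}. w v) \<le> w z" by (rule heavy_le[OF fin pos hz])
  moreover have "(\<Sum>v\<in>V-{y}. w v) \<le> w y" by (rule heavy_le[OF fin pos hy])
  ultimately have "w z = (\<Sum>v\<in>V-{y}. w v)" "w y = (\<Sum>v\<in>V-{z}. w v)" using Wz Wy by linarith+
  then show ?thesis by (simp add: mult.commute)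
qed

lemma weighted_sum:
  fixes w :: "'a \<Rightarrow> real"
  shows "(\<Sum>v\<in>V. (if P v then 1 - p else p) * w v) = p * (\<Sum>v\<in>V. w v) + (1 - 2*p) * (\<Sum>v\<in>V. if P v then w v else 0)"
proof -
  have "(\<Sum>v\<in>V. (if P v then 1 - p else p) * w v) = (\<Sum>v\<in>V. p * w v + (1 - 2*p) * (if P v then w v else 0))"
    by (rule sum.cong) (auto simp: algebra_simps)
  also have "\<dots> = p * (\<Sum>v\<in>V. w v) + (1 - 2*p) * (\<Sum>v\<in>V. if P v then w v else 0)"
    by (simp only: sum.distrib sum_distrib_left)
  finally show ?thesis .
qed

theorem lemma5:
  fixes V :: "'a set" and E :: "'a \<Rightarrow> 'a \<Rightarrow> bool" and p :: real
    and w :: "nat \<Rightarrow> 'a \<Rightarrow> real" and q :: "nat \<Rightarrow> 'a" and a :: "nat \<Rightarrow> 'a option"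
  assumes "simple_graph V E" and "graph_connected V E"
    and "0 < p" and "p < 1/2"
    and "median_process V E p w q a"
    and "(\<Sum>v\<in>V. w 0 v) = 1"
  shows "\<forall>\<tau>::nat. \<forall>x. heaviest V (w \<tau>) x \<longrightarrow> (\<Sum>v\<in>V - {x}. w \<tau> v) \<le> 1 / 2 ^ \<tau>"
proof -
  have fin: "finite V" using assms(1) by (simp add: simple_graph_def)
  have EV: "\<And>a b. E a b \<Longrightarrow> a \<in> V \<and> b \<in> V" using assms(1) unfolding simple_graph_def by meson
  have mpc: "(\<forall>v\<in>V. w 0 v > 0) \<and>
     (\<forall>t. is_median V E (w t) (q t) \<and>
          ((\<exists>v\<in>V. heavy V (w t) v) \<longrightarrow> heavy V (w t) (q t)) \<and>
          (\<forall>u. a t = Some u \<longrightarrow> E (q t) u) \<and>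
          (\<forall>v\<in>V. w (Suc t) v =
              (if compatible V E (w t) (q t) (a t) v then (1 - p) else p) * w t v))"
    using assms(5) unfolding median_process_def .
  have pos0: "\<forall>v\<in>V. w 0 v > 0" using mpc by (rule conjunct1)
  have mpt: "is_median V E (w t) (q t) \<and>
          ((\<exists>v\<in>V. heavy V (w t) v) \<longrightarrow> heavy V (w t) (q t)) \<and>
          (\<forall>u. a t = Some u \<longrightarrow> E (q t) u) \<and>
          (\<forall>v\<in>V. w (Suc t) v =
              (if compatible V E (w t) (q t) (a t) v then (1 - p) else p) * w t v)" for t
    using mpc by blast
  have med: "is_median V E (w t) (q t)" for t using mpt[of t] by blast
  have hq: "(\<exists>v\<in>V. heavy V (w t) v) \<Longrightarrow> heavy V (w t) (q t)" for t using mpt[of t] by blast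
  have ans: "a t = Some u \<Longrightarrow> E (q t) u" for t u using mpt[of t] by blast
  have upd: "v \<in> V \<Longrightarrow> w (Suc t) v =
              (if compatible V E (w t) (q t) (a t) v then (1 - p) else p) * w t v" for t v
    using mpt[of t] by blast
  have pos: "\<forall>v\<in>V. w t v > 0" for t
  proof (induction t)
    case 0 then show ?case using pos0 .
  next
    case (Suc t)
    show ?case
    proof
      fix v assume v: "v \<in> V"
      have "(if compatible V E (w t) (q t) (a t) v then (1 - p) else p) > 0" using assms(3,4) by auto
      then show "w (Suc t) v > 0" using upd[OF v, of t] Suc v by simp
    qed
  qed
  define m :: "nat \<Rightarrow> real" where "m t = (1/2)^(Suc t)" for t
  have mpos: "m t > 0" for t unfolding m_def by simp
  have mSuc: "m (Suc t) = m t / 2" for t unfolding m_def by simp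
  define J where "J t \<longleftrightarrow> (\<Sum>v\<in>V. w t v) \<le> 2 * m t \<or>
     (\<exists>z\<in>V. heavy V (w t) z \<and> w t z * (\<Sum>v\<in>V-{z}. w t v) \<le> (m t)^2)" for t
  have J: "J t" for t
  proof (induction t)
    case 0
    then show ?case unfolding J_def m_def using assms(6) by simp
  next
    case (Suc t)
    define W where "W = (\<Sum>v\<in>V. w t v)"
    show ?case
    proof (cases "\<exists>v\<in>V. heavy V (w t) v")
      case True
      define z where "z = q t"
      have hz: "heavy V (w t) z" using hq[OF True] z_def by simp
      have zV: "z \<in> V" using hz by (simp add: heavy_def)
      have hv: "(\<Sum>v\<in>V-{z}. w t v) \<le> w t z" by (rule heavy_le[OF fin pos hz])
      have Wz: "W = w t z + (\<Sum>v\<in>V-{z}. w t v)" unfolding W_def using fin zV by (simp add: sum.remove)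
      have pr: "w t z * (\<Sum>v\<in>V-{z}. w t v) \<le> (m t)^2"
        using Suc.IH unfolding J_def
      proof
        assume a1: "(\<Sum>v\<in>V. w t v) \<le> 2 * m t"
        define h where "h = w t z"
        define s where "s = (\<Sum>v\<in>V-{z}. w t v)"
        have s0: "s \<ge> 0" unfolding s_def using pos by (intro sum_nonneg) (auto simp: less_imp_le)
        have h0: "h > 0" unfolding h_def using pos zV by simp
        have "h + s \<le> 2 * m t" using a1 Wz W_def h_def s_def by simp
        then have "(h + s)^2 \<le> (2 * m t)^2" using s0 h0 by (intro power_mono) auto
        moreover have "4 * (h * s) \<le> (h + s)^2"
        proof -
          have "0 \<le> (h - s)^2" by simp
          then show ?thesis by (simp add: power2_eq_square algebra_simps)
        qed
        ultimately show ?thesis unfolding h_def s_def by (simp add: power_mult_distrib)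
      next
        assume "\<exists>y\<in>V. heavy V (w t) y \<and> w t y * (\<Sum>v\<in>V-{y}. w t v) \<le> (m t)^2"
        then obtain y where "heavy V (w t) y" "w t y * (\<Sum>v\<in>V-{y}. w t v) \<le> (m t)^2" by blast
        then show ?thesis using two_heavy[OF fin pos hz] by metis
      qed
      obtain cz c where wz: "w (Suc t) z = cz * w t z" and wo: "\<forall>v\<in>V-{z}. w (Suc t) v = c * w t v"
        and cc: "(cz = 1-p \<and> c = p) \<or> (cz = p \<and> c = 1-p)"
      proof (cases "a t")
        case None
        have "w (Suc t) z = (1-p) * w t z" using upd[OF zV, of t] None z_def
          by (simp add: compatible_def)
        moreover have "\<forall>v\<in>V-{z}. w (Suc t) v = p * w t v" using upd None z_def
          by (auto simp: compatible_def)
        ultimately show ?thesis using that by blast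
      next
        case (Some u)
        have hqt: "heavy V (w t) (q t)" using hz z_def by simp
        have "w (Suc t) z = p * w t z" using upd[OF zV, of t] Some z_def hqt
          by (simp add: compatible_def)
        moreover have "\<forall>v\<in>V-{z}. w (Suc t) v = (1-p) * w t v" using upd Some z_def hqt
          by (auto simp: compatible_def)
        ultimately show ?thesis using that by blast
      qed
      have "(\<Sum>v\<in>V. w (Suc t) v) \<le> m t \<or> (heavy V (w (Suc t)) z \<and> w (Suc t) z * (\<Sum>v\<in>V-{z}. w (Suc t) v) \<le> (m t/2)^2)"
        by (rule heavy_step[OF fin zV pos hv pr mpos assms(3,4) wz wo cc])
      then show ?thesis unfolding J_def mSuc using zV by auto
    next
      case False
      have nh: "\<not> heavy V (w t) v" if "v \<in> V" for v using False that by blast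
      have Wle: "W \<le> 2 * m t" using Suc.IH False unfolding J_def W_def by blast
      define P where "P v = compatible V E (w t) (q t) (a t) v" for v
      have qV: "q t \<in> V" using med[of t] by (simp add: is_median_def)
      have A: "2 * (\<Sum>v\<in>V. if P v then w t v else 0) \<le> W"
      proof (cases "a t")
        case None
        have "(\<Sum>v\<in>V. if P v then w t v else 0) = (\<Sum>v\<in>V. if v = q t then w t v else 0)"
          unfolding P_def using None by (intro sum.cong) (auto simp: compatible_def)
        also have "\<dots> = w t (q t)" using fin qV by (simp add: sum.delta')
        finally show ?thesis using not_heavy_lt[OF fin pos qV nh[OF qV]] W_def by simp
      next
        case (Some u)
        have "(\<Sum>v\<in>V. if P v then w t v else 0) = (\<Sum>v\<in>V. if on_shortest_path E (q t) v u then w t v else 0)"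
          unfolding P_def using Some nh[OF qV] by (intro sum.cong) (auto simp: compatible_def)
        moreover have "2 * (\<Sum>v\<in>V. if on_shortest_path E (q t) v u then w t v else 0) \<le> W"
          unfolding W_def by (rule median_half[OF assms(1,2) med ans[OF Some] pos])
        ultimately show ?thesis by simp
      qed
      have "(\<Sum>v\<in>V. w (Suc t) v) = (\<Sum>v\<in>V. (if P v then 1 - p else p) * w t v)"
        unfolding P_def by (intro sum.cong) (auto simp: upd)
      also have "\<dots> = p * W + (1 - 2*p) * (\<Sum>v\<in>V. if P v then w t v else 0)"
        unfolding W_def by (rule weighted_sum)
      also have "\<dots> \<le> p * W + (1 - 2*p) * (W / 2)"
        using A assms(4) by (intro add_left_mono mult_left_mono) auto
      also have "\<dots> = W / 2" by (simp add: algebra_simps)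
      also have "\<dots> \<le> m t" using Wle by simp
      finally show ?thesis unfolding J_def mSuc by simp
    qed
  qed
  show ?thesis
  proof (intro allI impI)
    fix \<tau> :: nat and x
    assume hx: "heaviest V (w \<tau>) x"
    have xV: "x \<in> V" and xmax: "\<forall>u\<in>V. w \<tau> u \<le> w \<tau> x" using hx by (auto simp: heaviest_def)
    have m2: "2 * m \<tau> = 1 / 2 ^ \<tau>" unfolding m_def by (simp add: power_one_over)
    have Wx: "(\<Sum>v\<in>V. w \<tau> v) = w \<tau> x + (\<Sum>v\<in>V-{x}. w \<tau> v)" using fin xV by (simp add: sum.remove)
    from J[of \<tau>] show "(\<Sum>v\<in>V - {x}. w \<tau> v) \<le> 1 / 2 ^ \<tau>" unfolding J_def
    proof
      assume "(\<Sum>v\<in>V. w \<tau> v) \<le> 2 * m \<tau>"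
      moreover have "w \<tau> x > 0" using pos xV by blast
      ultimately show ?thesis using Wx m2 by simp
    next
      assume "\<exists>z\<in>V. heavy V (w \<tau>) z \<and> w \<tau> z * (\<Sum>v\<in>V-{z}. w \<tau> v) \<le> (m \<tau>)^2"
      then obtain z where zV: "z \<in> V" and hz: "heavy V (w \<tau>) z"
        and pz: "w \<tau> z * (\<Sum>v\<in>V-{z}. w \<tau> v) \<le> (m \<tau>)^2" by blast
      define s where "s = (\<Sum>v\<in>V-{z}. w \<tau> v)"
      have Wz: "(\<Sum>v\<in>V. w \<tau> v) = w \<tau> z + s" unfolding s_def using fin zV by (simp add: sum.remove)
      have s0: "s \<ge> 0" unfolding s_def using pos by (intro sum_nonneg) (auto simp: less_imp_le)
      have sh: "s \<le> w \<tau> z" unfolding s_def by (rule heavy_le[OF fin pos hz])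
      have "s * s \<le> w \<tau> z * s" using sh s0 by (simp add: mult_right_mono)
      then have s2: "s^2 \<le> (m \<tau>)^2" using pz s_def by (simp add: power2_eq_square)
      have "0 \<le> m \<tau>" using mpos[of \<tau>] by simp
      from power2_le_imp_le[OF s2 this] have "s \<le> m \<tau>" .
      moreover have "w \<tau> z \<le> w \<tau> x" using xmax zV by blast
      ultimately show ?thesis using Wx Wz m2 mpos[of \<tau>] by simp
    qed
  qed
qed

end
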